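(* For every sufficiently large integer $m$ there exists a bipartite graph $H$ with an odd number of edges, maximum degree at most $102$, and vertex classes $A_1\cup A_2$ and $B_1\cup B_2$ (with $A_1,A_2,B_1,B_2$ pairwise disjoint), where $|A_1|=|B_1|=2m$ and $|A_2|=|B_2|=5m$, such that for every $A_1'\subseteq A_1$ and $B_1'\subseteq B_1$ with $|A_1'|=|B_1'|\ge m$, there is a perfect matching in $H$ between $A_1'\cup A_2$ and $B_1'\cup B_2$. *)

theory Defs
  imports Main
begin

text \<open>A bipartite graph with vertex classes A and B (disjoint) is represented by its
edge set E \<subseteq> A \<times> B; the pair (a,b) stands for the edge {a,b}.\<close>

definition bip_graph :: "'a set \<Rightarrow> 'a set \<Rightarrow> ('a \<times> 'a) set \<Rightarrow> bool" where
  "bip_graph A B E \<longleftrightarrow> finite A \<and> finite B \<and> A \<inter> B = {} \<and> E \<subseteq> A \<times> B"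

definition bdegree :: "('a \<times> 'a) set \<Rightarrow> 'a \<Rightarrow> nat" where
  "bdegree E v = card {e \<in> E. fst e = v \<or> snd e = v}"

definition max_degree_le :: "'a set \<Rightarrow> 'a set \<Rightarrow> ('a \<times> 'a) set \<Rightarrow> nat \<Rightarrow> bool" where
  "max_degree_le A B E d \<longleftrightarrow> (\<forall>v \<in> A \<union> B. bdegree E v \<le> d)"

definition perfect_matching_between ::
    "('a \<times> 'a) set \<Rightarrow> 'a set \<Rightarrow> 'a set \<Rightarrow> ('a \<times> 'a) set \<Rightarrow> bool" where
  "perfect_matching_between E X Y M \<longleftrightarrow>
     M \<subseteq> E \<and> M \<subseteq> X \<times> Y \<and>
     (\<forall>x\<in>X. \<exists>!y. (x, y) \<in> M) \<and> (\<forall>y\<in>Y. \<exists>!x. (x, y) \<in> M)"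

end

theory Submission
  imports Defs Complex_Main
begin


definition nbh :: "('a \<times> 'b) set \<Rightarrow> 'a set \<Rightarrow> 'b set \<Rightarrow> 'b set" where
  "nbh E S Y = {y\<in>Y. \<exists>x\<in>S. (x,y)\<in>E}"

lemma hall_aux:
  "finite X \<Longrightarrow> card X = n \<Longrightarrow> finite Y \<Longrightarrow> (\<forall>S\<subseteq>X. card S \<le> card (nbh E S Y)) \<Longrightarrow>
   \<exists>h. inj_on h X \<and> (\<forall>x\<in>X. h x \<in> Y \<and> (x, h x) \<in> E)"
proof (induction n arbitrary: X Y rule: less_induct)
  case (less n)
  show ?case
  proof (cases "X = {}")
    case True then show ?thesis by auto
  next
    case Xne: False
    show ?thesis
    proof (cases "\<exists>S. S \<subseteq> X \<and> S \<noteq> {} \<and> S \<noteq> X \<and> card (nbh E S Y) \<le> card S")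
      case True
      then obtain S where S: "S \<subseteq> X" "S \<noteq> {}" "S \<noteq> X" "card (nbh E S Y) \<le> card S" by blast
      have fS: "finite S" using S(1) less.prems(1) finite_subset by blast
      have cS: "card S < n" using S less.prems(1,2) by (metis psubsetI psubset_card_mono)
      have NS: "card (nbh E S Y) = card S" using S(4) S(1) less.prems(4) by (meson dual_order.antisym)
      have fN: "finite (nbh E S Y)" using less.prems(3) by (simp add: nbh_def)
      have "\<exists>h. inj_on h S \<and> (\<forall>x\<in>S. h x \<in> nbh E S Y \<and> (x, h x) \<in> E)"
      proof (rule less.IH[OF cS fS refl fN], intro allI impI)
        fix T assume T: "T \<subseteq> S"
        have "nbh E T (nbh E S Y) = nbh E T Y" using T by (auto simp: nbh_def)
        then show "card T \<le> card (nbh E T (nbh E S Y))" using less.prems(4) T S(1) by auto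
      qed
      then obtain h1 where h1: "inj_on h1 S" "\<forall>x\<in>S. h1 x \<in> nbh E S Y \<and> (x, h1 x) \<in> E" by blast
      have fXS: "finite (X - S)" using less.prems(1) by auto
      have cXS: "card (X - S) < n"
      proof -
        have "card (X - S) = card X - card S" using S(1) fS by (simp add: card_Diff_subset)
        moreover have "card S > 0" using S(2) fS by auto
        moreover have "card S \<le> card X" using S(1) less.prems(1) by (simp add: card_mono)
        ultimately show ?thesis using less.prems(2) by linarith
      qed
      have fY2: "finite (Y - nbh E S Y)" using less.prems(3) by auto
      have "\<exists>h. inj_on h (X - S) \<and> (\<forall>x\<in>X - S. h x \<in> Y - nbh E S Y \<and> (x, h x) \<in> E)"
      proof -
        have "\<exists>h. inj_on h (X - S) \<and> (\<forall>x\<in>X - S. h x \<in> Y - nbh E S Y \<and> (x, h x) \<in> E)"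
        proof (rule less.IH[OF cXS fXS refl fY2], intro allI impI)
          fix T assume T: "T \<subseteq> X - S"
          have e1: "nbh E T (Y - nbh E S Y) = nbh E T Y - nbh E S Y" by (auto simp: nbh_def)
          have e2: "nbh E (T \<union> S) Y = nbh E T Y \<union> nbh E S Y" by (auto simp: nbh_def)
          have "T \<union> S \<subseteq> X" using T S(1) by auto
          then have "card (T \<union> S) \<le> card (nbh E (T \<union> S) Y)" using less.prems(4) by blast
          moreover have "card (T \<union> S) = card T + card S"
            using T fS fXS by (intro card_Un_disjoint) (auto intro: finite_subset)
          moreover have "card (nbh E T Y \<union> nbh E S Y) = card (nbh E T Y - nbh E S Y) + card (nbh E S Y)"
            proof -
            have "nbh E T Y \<union> nbh E S Y = (nbh E T Y - nbh E S Y) \<union> nbh E S Y" by blast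
            moreover have "finite (nbh E T Y)" using less.prems(3) by (simp add: nbh_def)
            ultimately show ?thesis using fN by (metis card_Un_disjoint Diff_disjoint Int_commute finite_Diff)
          qed
          ultimately have "card T + card S \<le> card (nbh E T Y - nbh E S Y) + card (nbh E S Y)" by (simp add: e2)
          then show "card T \<le> card (nbh E T (Y - nbh E S Y))" unfolding e1 using NS by linarith
        qed
        then show ?thesis .
      qed
      then obtain h2 where h2: "inj_on h2 (X - S)" "\<forall>x\<in>X - S. h2 x \<in> Y - nbh E S Y \<and> (x, h2 x) \<in> E" by blast
      define h where "h x = (if x \<in> S then h1 x else h2 x)" for x
      have "inj_on h X"
        unfolding inj_on_def h_def using h1 h2 unfolding inj_on_def
        by (metis DiffD2 DiffI)
      moreover have "\<forall>x\<in>X. h x \<in> Y \<and> (x, h x) \<in> E" using h1 h2 unfolding h_def by (auto simp: nbh_def)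
      ultimately show ?thesis by blast
    next
      case False
      have big: "card S < card (nbh E S Y)" if "S \<subseteq> X" "S \<noteq> {}" "S \<noteq> X" for S
      proof (rule ccontr)
        assume "\<not> card S < card (nbh E S Y)"
        then have "card (nbh E S Y) \<le> card S" by simp
        then show False using False that by blast
      qed
      obtain x where x: "x \<in> X" using Xne by blast
      have "card {x} \<le> card (nbh E {x} Y)" using less.prems(4) x by auto
      then have "nbh E {x} Y \<noteq> {}" by auto
      then obtain y where y: "y \<in> Y" "(x,y) \<in> E" by (auto simp: nbh_def)
      have fX1: "finite (X - {x})" using less.prems(1) by auto
      have cX1: "card (X - {x}) < n" using less.prems(1,2) x by (metis card_Diff1_less)
      have "\<exists>h. inj_on h (X - {x}) \<and> (\<forall>z\<in>X - {x}. h z \<in> Y - {y} \<and> (z, h z) \<in> E)"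
      proof (rule less.IH[OF cX1 fX1 refl], use less.prems(3) in simp, intro allI impI)
        fix T assume T: "T \<subseteq> X - {x}"
        show "card T \<le> card (nbh E T (Y - {y}))"
        proof (cases "T = {}")
          case True then show ?thesis by simp
        next
          case False
          have "T \<noteq> X" using T x by auto
          then have "card T < card (nbh E T Y)" using big[of T] T False by auto
          moreover have "nbh E T (Y - {y}) = nbh E T Y - {y}" by (auto simp: nbh_def)
          moreover have "card (nbh E T Y) \<le> card (nbh E T Y - {y}) + 1"
            proof -
            have "finite (nbh E T Y)" using less.prems(3) by (simp add: nbh_def)
            then show ?thesis
            proof (cases "y \<in> nbh E T Y")
              case True
              then show ?thesis using card_Suc_Diff1[OF \<open>finite (nbh E T Y)\<close> True] by linarith
            qed simp
          qed
          ultimately show ?thesis by simp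
        qed
      qed
      then obtain h' where h': "inj_on h' (X - {x})" "\<forall>z\<in>X - {x}. h' z \<in> Y - {y} \<and> (z, h' z) \<in> E" by blast
      define h where "h = h'(x := y)"
      have "inj_on h X" unfolding h_def using h' x
        unfolding inj_on_def by (metis DiffD2 DiffI fun_upd_apply singletonD singletonI)
      moreover have "\<forall>z\<in>X. h z \<in> Y \<and> (z, h z) \<in> E" using h' y unfolding h_def by auto
      ultimately show ?thesis by blast
    qed
  qed
qed

lemma hall:
  assumes "finite X" "finite Y" "\<And>S. S\<subseteq>X \<Longrightarrow> card S \<le> card (nbh E S Y)"
  shows "\<exists>h. inj_on h X \<and> (\<forall>x\<in>X. h x \<in> Y \<and> (x, h x) \<in> E)"
  using hall_aux[OF assms(1) refl assms(2)] assms(3) by blast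




fun ff :: "nat \<Rightarrow> nat \<Rightarrow> nat" where
  "ff a 0 = 1"
| "ff a (Suc k) = (a - k) * ff a k"

lemma ff_Suc2: "ff a (Suc k) = a * ff (a - 1) k"
proof (induction k)
  case 0 then show ?case by simp
next
  case (Suc k)
  have "ff a (Suc (Suc k)) = (a - Suc k) * ff a (Suc k)" by simp
  also have "\<dots> = (a - Suc k) * (a * ff (a - 1) k)" using Suc by simp
  also have "\<dots> = a * ((a - 1 - k) * ff (a - 1) k)" by (simp add: algebra_simps)
  finally show ?case by simp
qed

lemma ff_zero: "a < k \<Longrightarrow> ff a k = 0"
proof (induction k)
  case 0 then show ?case by simp
next
  case (Suc k)
  then show ?case by (cases "a = k") auto
qed

lemma ff_add: "ff N (j + k) = ff N j * ff (N - j) k"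
  by (induction k) (simp_all add: algebra_simps diff_diff_add)

lemma ff_ratio: "s \<le> N \<Longrightarrow> ff s j * N ^ j \<le> s ^ j * ff N j"
proof (induction j)
  case 0 then show ?case by simp
next
  case (Suc j)
  have a: "(s - j) * N \<le> s * (N - j)"
  proof (cases "j \<le> s")
    case True
    have "(s - j) * N = s * N - j * N" by (simp add: diff_mult_distrib)
    moreover have "s * (N - j) = s * N - s * j" by (simp add: diff_mult_distrib2)
    moreover have "s * j \<le> N * j" using Suc.prems by (rule mult_le_mono1)
    ultimately show ?thesis by (metis diff_le_mono2 mult.commute)
  qed simp
  have "ff s (Suc j) * N ^ Suc j = ((s - j) * N) * (ff s j * N ^ j)" by (simp add: algebra_simps)
  also have "\<dots> \<le> (s * (N - j)) * (s ^ j * ff N j)"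
    by (rule mult_le_mono[OF a Suc.IH[OF Suc.prems]])
  also have "\<dots> = s ^ Suc j * ff N (Suc j)" by (simp add: algebra_simps)
  finally show ?case .
qed

definition G :: "nat \<Rightarrow> 'a set \<Rightarrow> 'a set \<Rightarrow> nat set \<Rightarrow> 'a list set" where
  "G n B S X = {xs. length xs = n \<and> distinct xs \<and> set xs \<subseteq> B \<and> (\<forall>i\<in>X. xs ! i \<in> S)}"

lemma G_finite: "finite B \<Longrightarrow> finite (G n B S X)"
  unfolding G_def
  by (rule finite_subset[OF _ finite_lists_length_eq[of B n]]) auto

lemma card_shift: "card X = card {i. Suc i \<in> X} + (if 0 \<in> X then 1 else 0)" if "finite X"
proof -
  have e: "X = (if 0 \<in> X then {0} else {}) \<union> Suc ` {i. Suc i \<in> X}"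
  proof (rule set_eqI)
    fix x show "x \<in> X \<longleftrightarrow> x \<in> (if 0 \<in> X then {0} else {}) \<union> Suc ` {i. Suc i \<in> X}"
    proof (cases x)
      case 0 then show ?thesis by auto
    next
      case (Suc k) then show ?thesis by auto
    qed
  qed
  have f: "finite {i. Suc i \<in> X}" using that by (simp add: finite_vimageI inj_Suc vimage_def[symmetric])
  have c: "card ((if 0 \<in> X then {0} else {}) \<union> Suc ` {i. Suc i \<in> X}) = card (if 0 \<in> X then {0} else {}) + card (Suc ` {i. Suc i \<in> X})"
    using f by (cases "0 \<in> X") (auto simp: card_insert_if)
  have "card X = card (if 0 \<in> X then {0} else {}) + card (Suc ` {i. Suc i \<in> X})"
    using arg_cong[of _ _ card, OF e] c by simp
  then show ?thesis by (cases "0 \<in> X") (simp_all add: card_image)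
qed

lemma G_card:
  "finite B \<Longrightarrow> S \<subseteq> B \<Longrightarrow> X \<subseteq> {0..<n} \<Longrightarrow>
   card (G n B S X) \<le> ff (card S) (card X) * ff (card B - card X) (n - card X)"
proof (induction n arbitrary: B S X)
  case 0
  then have "X = {}" by auto
  moreover have "G 0 B S {} = {[]}" by (auto simp: G_def)
  ultimately show ?case by simp
next
  case (Suc n)
  define X' where "X' = {i. Suc i \<in> X}"
  have X'sub: "X' \<subseteq> {0..<n}" using Suc.prems(3) by (auto simp: X'_def)
  have fX: "finite X" using Suc.prems(3) finite_subset by blast
  have cX: "card X = card X' + (if 0 \<in> X then 1 else 0)" using card_shift[OF fX] by (simp add: X'_def)
  have cX'n: "card X' \<le> n" using X'sub by (metis card_atLeastLessThan card_mono finite_atLeastLessThan diff_zero)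
  define D where "D = (if 0 \<in> X then S else B)"
  have DB: "D \<subseteq> B" using Suc.prems(2) by (auto simp: D_def)
  have sub: "G (Suc n) B S X \<subseteq> (\<Union>x\<in>D. (Cons x) ` G n (B - {x}) (S - {x}) X')"
  proof
    fix xs assume xs: "xs \<in> G (Suc n) B S X"
    then obtain x ys where xys: "xs = x # ys" unfolding G_def by (cases xs) auto
    have "x \<in> D" using xs xys by (auto simp: G_def D_def)
    moreover have "ys \<in> G n (B - {x}) (S - {x}) X'"
    proof -
      have "\<forall>i\<in>X'. ys ! i \<in> S - {x}"
      proof
        fix i assume i: "i \<in> X'"
        then have "i < n" using X'sub by auto
        moreover have "xs ! Suc i \<in> S" using xs i by (auto simp: G_def X'_def)
        moreover have "length ys = n" "distinct (x # ys)" using xs xys by (auto simp: G_def)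
        ultimately show "ys ! i \<in> S - {x}" using xys by (auto simp: nth_mem)
      qed
      then show ?thesis using xs xys by (auto simp: G_def)
    qed
    ultimately show "xs \<in> (\<Union>x\<in>D. (Cons x) ` G n (B - {x}) (S - {x}) X')" using xys by blast
  qed
  have fD: "finite D" using DB Suc.prems(1) finite_subset by blast
  have "card (G (Suc n) B S X) \<le> card (\<Union>x\<in>D. (Cons x) ` G n (B - {x}) (S - {x}) X')"
    using sub by (intro card_mono) (use fD Suc.prems(1) in \<open>auto simp: G_finite\<close>)
  also have "\<dots> \<le> (\<Sum>x\<in>D. card ((Cons x) ` G n (B - {x}) (S - {x}) X'))"
    by (rule card_UN_le[OF fD])
  also have "\<dots> \<le> (\<Sum>x\<in>D. card (G n (B - {x}) (S - {x}) X'))"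
    by (intro sum_mono card_image_le) (use Suc.prems(1) in \<open>simp add: G_finite\<close>)
  also have "\<dots> \<le> (\<Sum>x\<in>D. ff (card (S - {x})) (card X') * ff (card (B - {x}) - card X') (n - card X'))"
    by (intro sum_mono Suc.IH) (use Suc.prems X'sub in auto)
  finally have main: "card (G (Suc n) B S X) \<le> (\<Sum>x\<in>D. ff (card (S - {x})) (card X') * ff (card (B - {x}) - card X') (n - card X'))" .
  define s where "s = card S"
  define N where "N = card B"
  define j where "j = card X'"
  have fS: "finite S" using Suc.prems(1,2) finite_subset by blast
  have sN: "s \<le> N" unfolding s_def N_def using Suc.prems(1,2) by (simp add: card_mono)
  have cB: "x \<in> B \<Longrightarrow> card (B - {x}) = N - 1" for x using Suc.prems(1) by (simp add: N_def)
  have cB': "x \<in> S \<Longrightarrow> card (B - {x}) = N - 1" for x using cB Suc.prems(2) by blast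
  have cS: "card (S - {x}) = (if x \<in> S then s - 1 else s)" for x using fS by (simp add: s_def)
  show ?case
  proof (cases "0 \<in> X")
    case True
    have cXj: "card X = Suc j" using cX True by (simp add: j_def)
    have "(\<Sum>x\<in>D. ff (card (S - {x})) (card X') * ff (card (B - {x}) - card X') (n - card X'))
        = (\<Sum>x\<in>S. ff (s - 1) j * ff (N - 1 - j) (n - j))"
      using True Suc.prems(2) by (intro sum.cong) (auto simp: D_def cS cB cB' j_def N_def)
    also have "\<dots> = s * ff (s - 1) j * ff (N - 1 - j) (n - j)" by (simp add: s_def)
    also have "\<dots> = ff s (Suc j) * ff (N - Suc j) (Suc n - Suc j)" by (simp only: ff_Suc2) (simp add: diff_diff_add)
    finally show ?thesis using main cXj by (simp add: s_def N_def)
  next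
    case False
    have cXj: "card X = j" using cX False by (simp add: j_def)
    let ?c = "ff (N - 1 - j) (n - j)"
    have "(\<Sum>x\<in>D. ff (card (S - {x})) (card X') * ff (card (B - {x}) - card X') (n - card X'))
        = (\<Sum>x\<in>B. (if x \<in> S then ff (s - 1) j * ?c else ff s j * ?c))"
      using False by (intro sum.cong) (auto simp: D_def cS cB cB' j_def N_def)
    also have "\<dots> = card S * (ff (s - 1) j * ?c) + card (B - S) * (ff s j * ?c)"
      using Suc.prems(1,2) by (simp add: sum.If_cases Int_absorb1 Diff_eq)
    also have "\<dots> = (s * ff (s - 1) j + (N - s) * ff s j) * ?c"
      using Suc.prems(1,2) by (simp add: s_def N_def card_Diff_subset fS algebra_simps)
    also have "s * ff (s - 1) j = (s - j) * ff s j" using ff_Suc2[of s j] by simp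
    also have "((s - j) * ff s j + (N - s) * ff s j) * ?c \<le> ff s j * ff (N - j) (Suc n - j)"
    proof (cases "s < j")
      case True then show ?thesis by (simp add: ff_zero)
    next
      case False
      have h1: "(s - j) + (N - s) = N - j" using False sN by simp
      have h2: "ff (N - j) (Suc n - j) = (N - j) * ?c"
        using cX'n ff_Suc2[of "N - j" "n - j"] by (simp add: j_def Suc_diff_le diff_diff_add)
      show ?thesis by (simp only: h2 add_mult_distrib[symmetric] h1) (simp add: mult_ac)
    qed
    finally show ?thesis using main cXj by (simp add: s_def N_def)
  qed
qed




lemma pow_le_exp_fact: "real j ^ j \<le> exp (real j) * fact j"
proof (induction j)
  case 0 then show ?case by simp
next
  case (Suc j)
  have a: "real (Suc j) ^ j \<le> real j ^ j * exp 1"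
  proof (cases "j = 0")
    case True then show ?thesis by simp
  next
    case False
    have "real (Suc j) = real j * (1 + 1 / real j)" using False by (simp add: field_simps)
    then have "real (Suc j) ^ j = real j ^ j * (1 + 1 / real j) ^ j" by (simp add: power_mult_distrib)
    also have "(1 + 1 / real j) ^ j \<le> exp (1 / real j) ^ j"
      by (rule power_mono) (simp_all add: add_nonneg_nonneg)
    also have "exp (1 / real j) ^ j = exp 1"
      using False by (simp add: exp_of_nat_mult[symmetric])
    finally show ?thesis by (simp add: mult_left_mono)
  qed
  have "real (Suc j) ^ Suc j = real (Suc j) * real (Suc j) ^ j" by simp
  also have "\<dots> \<le> real (Suc j) * (real j ^ j * exp 1)" by (rule mult_left_mono[OF a]) simp
  also have "\<dots> \<le> real (Suc j) * (exp (real j) * fact j * exp 1)"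
    by (rule mult_left_mono[OF mult_right_mono[OF Suc.IH]]) auto
  also have "\<dots> = exp (real (Suc j)) * fact (Suc j)"
    by (simp add: exp_add[symmetric] algebra_simps)
  finally show ?case .
qed

lemma binom_le1: "real (n choose j) \<le> real n ^ j / fact j"
proof -
  have "real ((n choose j) * fact j) \<le> real (n ^ j)" using binomial_fact_pow[of n j] by linarith
  then show ?thesis by (simp add: field_simps)
qed

lemma binom_le2: "1 \<le> j \<Longrightarrow> j \<le> n \<Longrightarrow> real (n choose (j - 1)) \<le> real n ^ j / fact j"
proof -
  assume j: "1 \<le> j" "j \<le> n"
  have "real (n choose (j - 1)) \<le> real n ^ (j - 1) / fact (j - 1)" by (rule binom_le1)
  also have "\<dots> = real n ^ (j - 1) * real j / fact j"
  proof -
    obtain k where k: "j = Suc k" using j by (cases j) auto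
    have "fact j = real j * fact k" by (simp add: k fact_Suc)
    then show ?thesis using k by simp
  qed
  also have "\<dots> \<le> real n ^ (j - 1) * real n / fact j"
    using j by (intro divide_right_mono mult_left_mono) auto
  also have "\<dots> = real n ^ j / fact j"
    using j by (cases j) (auto simp: field_simps)
  finally show ?thesis .
qed

lemma term_bound:
  assumes j: "1 \<le> j" "j \<le> m"
  shows "real (7*m choose j) * real (5*m choose (j - 1)) * (real j / (5 * real m)) ^ (j * 32) \<le> (1/4) ^ j"
proof -
  have m0: "real m > 0" using j by simp
  have jpos: "real j > 0" using j by simp
  define e where "e = exp (1::real)"
  have e3: "e \<le> 3" unfolding e_def using exp_le by simp
  have epos: "e > 0" unfolding e_def by simp
  have ff: "1 / fact j \<le> e ^ j / real j ^ j"
    using pow_le_exp_fact[of j] jpos by (simp add: field_simps e_def exp_of_nat_mult[symmetric])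
  have c1: "real (7*m choose j) \<le> real (7*m) ^ j / fact j" by (rule binom_le1)
  have c2: "real (5*m choose (j - 1)) \<le> real (5*m) ^ j / fact j" by (rule binom_le2) (use j in auto)
  define a where "a = 7 * real m"
  define b where "b = 5 * real m"
  define J where "J = real j"
  have bpos: "b > 0" using m0 by (simp add: b_def)
  have Jpos: "J > 0" using jpos by (simp add: J_def)
  define q where "q = a * b * (e^2 / J^2) * (J / b) ^ 32"
  have "real (7*m choose j) * real (5*m choose (j - 1)) \<le> (real (7*m) ^ j / fact j) * (real (5*m) ^ j / fact j)"
    by (intro mult_mono c1 c2) auto
  also have "\<dots> = (a * b) ^ j * (1 / fact j) ^ 2"
  proof -
    have "real (7*m) = a" "real (5*m) = b" by (simp_all add: a_def b_def)
    then show ?thesis by (simp only:) (simp add: power_mult_distrib power2_eq_square)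
  qed
  also have "\<dots> \<le> (a * b) ^ j * (e ^ j / J ^ j) ^ 2"
    unfolding J_def by (intro mult_left_mono power_mono ff) (auto simp: a_def b_def)
  finally have A: "real (7*m choose j) * real (5*m choose (j - 1)) \<le> (a * b) ^ j * (e ^ j / J ^ j) ^ 2" .
  have p1: "(e ^ j / J ^ j) ^ 2 = (e^2 / J^2) ^ j" by (metis power_divide power_mult mult.commute)
  have p2: "(J / b) ^ (j * 32) = ((J / b) ^ 32) ^ j" by (metis power_mult mult.commute)
  have "real (7*m choose j) * real (5*m choose (j - 1)) * (real j / (5 * real m)) ^ (j * 32)
      \<le> (a * b) ^ j * (e ^ j / J ^ j) ^ 2 * (J / b) ^ (j * 32)"
  proof -
    have "real j / (5 * real m) = J / b" by (simp add: J_def b_def)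
    then show ?thesis using A by (simp only:) (rule mult_right_mono, auto simp: J_def b_def)
  qed
  also have "\<dots> = q ^ j"
    unfolding q_def p1 p2 by (simp only: power_mult_distrib)
  also have "\<dots> \<le> (1/4) ^ j"
  proof (rule power_mono)
    have J32: "J^32 = J^30 * J^2" by (simp flip: power_add)
    have b32: "b^32 = 5^32 * real m ^ 32" by (simp add: b_def power_mult_distrib)
    have "q = a * b * e^2 * J^30 / b^32"
    proof -
      have h1: "(J / b) ^ 32 = J^30 * J^2 / b^32" by (simp only: power_divide J32)
      have h2: "e^2 / J^2 * (J^30 * J^2 / b^32) = e^2 * J^30 / b^32"
        using Jpos by (simp add: divide_simps)
      show ?thesis unfolding q_def h1 mult.assoc h2 by simp
    qed
    also have "\<dots> \<le> a * b * e^2 * real m ^ 30 / b^32"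
      using j bpos epos by (intro divide_right_mono mult_left_mono power_mono) (auto simp: J_def a_def b_def)
    also have "\<dots> = 35 * e^2 / 5 ^ 32"
    proof -
      have "real m ^ 32 = real m ^ 30 * real m ^ 2" by (simp flip: power_add)
      then have mm: "real m * (real m * real m ^ 30) = real m ^ 32" by (simp add: power2_eq_square)
      show ?thesis using m0 unfolding b32 by (simp add: a_def b_def power2_eq_square field_simps mm)
    qed
    also have "\<dots> \<le> 35 * 3^2 / 5 ^ 32"
      using e3 epos by (intro divide_right_mono mult_left_mono power_mono) auto
    also have "\<dots> \<le> 1/4" by simp
    finally show "q \<le> 1/4" .
    show "0 \<le> q" unfolding q_def using m0 epos Jpos bpos by (simp add: a_def)
  qed
  finally show ?thesis .
qed

lemma geom_quarter: "(\<Sum>j\<in>{1..m}. (1/4::real) ^ j) \<le> 1/3"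
proof -
  have "(\<Sum>j\<in>{1..m}. (1/4::real) ^ j) = 1/3 - (1/3) * (1/4) ^ m"
  proof (induction m)
    case 0 then show ?case by simp
  next
    case (Suc m)
    have "(\<Sum>j\<in>{1..Suc m}. (1/4::real) ^ j) = (\<Sum>j\<in>{1..m}. (1/4::real) ^ j) + (1/4) ^ Suc m"
      by simp
    also have "(1/4::real) ^ Suc m = (1/4) * (1/4) ^ m" by simp
    finally show ?case using Suc by simp
  qed
  then show ?thesis by simp
qed




lemma ff_prod: "n \<le> N \<Longrightarrow> ff N n = \<Prod>{N - n + 1..N}"
proof (induction n)
  case 0 then show ?case by simp
next
  case (Suc n)
  have "{N - Suc n + 1..N} = insert (N - n) {N - n + 1..N}" using Suc.prems by auto
  then have "\<Prod>{N - Suc n + 1..N} = (N - n) * \<Prod>{N - n + 1..N}" by simp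
  then show ?case using Suc by simp
qed

lemma card_lists_ff: "n \<le> N \<Longrightarrow> card {xs. length xs = n \<and> distinct xs \<and> set xs \<subseteq> {0..<N}} = ff N n"
  using card_lists_distinct_length_eq[of "{0..<N}" n] ff_prod[of n N] by simp

lemma real_card_UN_le:
  assumes "finite I" "\<And>i. i \<in> I \<Longrightarrow> real (card (A i)) \<le> c i"
  shows "real (card (\<Union>i\<in>I. A i)) \<le> (\<Sum>i\<in>I. c i)"
proof -
  have "card (\<Union>i\<in>I. A i) \<le> (\<Sum>i\<in>I. card (A i))" by (rule card_UN_le[OF assms(1)])
  then have "real (card (\<Union>i\<in>I. A i)) \<le> (\<Sum>i\<in>I. real (card (A i)))" by (metis of_nat_le_iff of_nat_sum)
  also have "\<dots> \<le> (\<Sum>i\<in>I. c i)" by (intro sum_mono assms(2))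
  finally show ?thesis .
qed

definition nb :: "nat list list \<Rightarrow> nat set \<Rightarrow> nat set" where
  "nb ls X = {l ! x div 2 | l x. l \<in> set ls \<and> x \<in> X}"

lemma nb_mono: "X \<subseteq> Y \<Longrightarrow> nb ls X \<subseteq> nb ls Y"
  unfolding nb_def by blast

definition slots :: "nat \<Rightarrow> nat set \<Rightarrow> nat set" where
  "slots N W = {s \<in> {0..<N}. s div 2 \<in> W}"

lemma card_slots:
  assumes "W \<subseteq> {0..<k}" shows "card (slots (2*k) W) = 2 * card W"
proof -
  have fW: "finite W" using assms finite_subset by blast
  have e: "slots (2*k) W = (\<lambda>s. 2*s) ` W \<union> (\<lambda>s. 2*s+1) ` W"
  proof (rule set_eqI)
    fix s
    show "s \<in> slots (2*k) W \<longleftrightarrow> s \<in> (\<lambda>s. 2*s) ` W \<union> (\<lambda>s. 2*s+1) ` W"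
    proof
      assume "s \<in> slots (2*k) W"
      then have "s div 2 \<in> W" by (simp add: slots_def)
      moreover have "s = 2 * (s div 2) \<or> s = 2 * (s div 2) + 1" by presburger
      ultimately show "s \<in> (\<lambda>s. 2*s) ` W \<union> (\<lambda>s. 2*s+1) ` W" by (metis Un_iff image_eqI)
    next
      assume "s \<in> (\<lambda>s. 2*s) ` W \<union> (\<lambda>s. 2*s+1) ` W"
      then show "s \<in> slots (2*k) W" using assms by (auto simp: slots_def)
    qed
  qed
  have "card ((\<lambda>s. 2*s) ` W \<union> (\<lambda>s. 2*s+1) ` W) = card ((\<lambda>s. 2*s) ` W) + card ((\<lambda>s. 2*s+1) ` W)"
    by (rule card_Un_disjoint) (use fW in auto, presburger)
  also have "\<dots> = 2 * card W" by (simp add: card_image inj_on_def)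
  finally show ?thesis using e by simp
qed

lemma CL:
  assumes m1: "m \<ge> 1"
  shows "\<exists>ls. length ls = 32 \<and> (\<forall>l\<in>set ls. length l = 7*m \<and> distinct l \<and> set l \<subseteq> {0..<10*m}) \<and>
    (\<forall>X \<subseteq> {0..<7*m}. card X \<le> m \<longrightarrow> card X \<le> card (nb ls X)) \<and>
    (\<forall>X \<subseteq> {0..<7*m}. m < card X \<longrightarrow> 7*m \<le> 2 * card (nb ls X))"
proof -
  define n where "n = 7*m"
  define N where "N = 10*m"
  define V where "V = {0..<5*m}"
  define d :: nat where "d = 32"
  define Lst where "Lst = {xs. length xs = n \<and> distinct xs \<and> set xs \<subseteq> {0..<N}}"
  define L where "L = ff N n"
  have nN: "n \<le> N" by (simp add: n_def N_def)
  have cLst: "card Lst = L" unfolding Lst_def L_def by (rule card_lists_ff[OF nN])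
  have fLst: "finite Lst" unfolding Lst_def
    by (rule finite_subset[OF _ finite_lists_length_eq[of "{0..<N}" n]]) auto
  have Lpos: "L > 0" unfolding L_def using nN by (simp add: ff_prod)
  define T where "T = {ls. set ls \<subseteq> Lst \<and> length ls = d}"
  have cT: "card T = L ^ d" unfolding T_def using card_lists_length_eq[OF fLst, of d] cLst by simp
  define Bd where "Bd X W = {ls. set ls \<subseteq> G n {0..<N} (slots N W) X \<and> length ls = d}" for X W
  define Xs where "Xs j = {X. X \<subseteq> {0..<n} \<and> card X = j}" for j
  define Ws where "Ws k = {W. W \<subseteq> V \<and> card W = k}" for k
  define w where "w = (7*m) div 2"
  have N2: "N = 2 * (5*m)" by (simp add: N_def)
  have cBd: "real (card (Bd X W)) \<le> ((2 * real (card W) / real N) ^ card X) ^ d * real L ^ d"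
    if X: "X \<subseteq> {0..<n}" and W: "W \<subseteq> V" for X W
  proof -
    define j where "j = card X"
    define s where "s = card (slots N W)"
    have s2: "s = 2 * card W" unfolding s_def N2 by (rule card_slots) (use W in \<open>simp add: V_def\<close>)
    have sN: "s \<le> N"
    proof -
      have "card W \<le> 5*m" using W card_mono[of V W] by (simp add: V_def)
      then show ?thesis using s2 by (simp add: N_def)
    qed
    have jn: "j \<le> n" unfolding j_def using X card_mono[of "{0..<n}" X] by simp
    have fG: "finite (G n {0..<N} (slots N W) X)" by (rule G_finite) simp
    have c1: "card (Bd X W) = card (G n {0..<N} (slots N W) X) ^ d"
      unfolding Bd_def using card_lists_length_eq[OF fG, of d] by simp
    have c2: "card (G n {0..<N} (slots N W) X) \<le> ff s j * ff (N - j) (n - j)"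
    proof -
      have "slots N W \<subseteq> {0..<N}" by (auto simp: slots_def)
      from G_card[OF _ this X] show ?thesis by (simp add: s_def j_def)
    qed
    have c3: "ff s j * N ^ j \<le> s ^ j * ff N j" by (rule ff_ratio[OF sN])
    have c4: "L = ff N j * ff (N - j) (n - j)" unfolding L_def using ff_add[of N j "n - j"] jn by simp
    have "card (G n {0..<N} (slots N W) X) * N ^ j \<le> s ^ j * L"
    proof -
      have "card (G n {0..<N} (slots N W) X) * N ^ j \<le> ff s j * ff (N - j) (n - j) * N ^ j"
        using c2 by simp
      also have "\<dots> = (ff s j * N ^ j) * ff (N - j) (n - j)" by simp
      also have "\<dots> \<le> (s ^ j * ff N j) * ff (N - j) (n - j)" using c3 by simp
      also have "\<dots> = s ^ j * L" using c4 by simp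
      finally show ?thesis .
    qed
    then have "real (card (G n {0..<N} (slots N W) X)) * real N ^ j \<le> real s ^ j * real L"
      by (metis of_nat_le_iff of_nat_mult of_nat_power)
    moreover have "real N > 0" using m1 by (simp add: N_def)
    ultimately have "real (card (G n {0..<N} (slots N W) X)) \<le> (real s / real N) ^ j * real L"
      by (simp add: field_simps power_divide)
    then have "real (card (G n {0..<N} (slots N W) X)) ^ d \<le> ((real s / real N) ^ j * real L) ^ d"
      by (intro power_mono) auto
    then show ?thesis using c1 s2 by (simp add: power_mult_distrib j_def)
  qed
  have inBd: "ls \<in> Bd X W" if ls: "ls \<in> T" and X: "X \<subseteq> {0..<n}" and nW: "nb ls X \<subseteq> W" for ls X W
  proof -
    have "set ls \<subseteq> G n {0..<N} (slots N W) X"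
    proof
      fix l assume l: "l \<in> set ls"
      then have lL: "l \<in> Lst" using ls by (auto simp: T_def)
      have "\<forall>i\<in>X. l ! i \<in> slots N W"
      proof
        fix i assume i: "i \<in> X"
        then have "i < length l" using X lL by (auto simp: Lst_def)
        then have "l ! i \<in> set l" by (rule nth_mem)
        then have "l ! i \<in> {0..<N}" using lL by (auto simp: Lst_def)
        moreover have "l ! i div 2 \<in> W" using nW l i by (auto simp: nb_def)
        ultimately show "l ! i \<in> slots N W" by (simp add: slots_def)
      qed
      then show "l \<in> G n {0..<N} (slots N W) X" using lL by (simp add: G_def Lst_def)
    qed
    then show ?thesis using ls by (simp add: Bd_def T_def)
  qed
  have nbV: "nb ls X \<subseteq> V" if ls: "ls \<in> T" and X: "X \<subseteq> {0..<n}" for ls X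
  proof
    fix v assume "v \<in> nb ls X"
    then obtain l x where v: "v = l ! x div 2" "l \<in> set ls" "x \<in> X" by (auto simp: nb_def)
    then have lL: "l \<in> Lst" using ls by (auto simp: T_def)
    have "x < length l" using X lL v by (auto simp: Lst_def)
    then have "l ! x \<in> set l" by (rule nth_mem)
    then have "l ! x < N" using lL by (auto simp: Lst_def)
    then show "v \<in> V" using v by (auto simp: V_def N_def)
  qed
  have fV: "finite V" "card V = 5*m" by (simp_all add: V_def)
  define U1 where "U1 = (\<Union>j\<in>{1..m}. \<Union>X\<in>Xs j. \<Union>W\<in>Ws (j - 1). Bd X W)"
  define U2 where "U2 = (\<Union>X\<in>Xs (m+1). \<Union>W\<in>Ws w. Bd X W)"
  define good where "good ls \<longleftrightarrow> (\<forall>X \<subseteq> {0..<7*m}. card X \<le> m \<longrightarrow> card X \<le> card (nb ls X)) \<and>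
    (\<forall>X \<subseteq> {0..<7*m}. m < card X \<longrightarrow> 7*m \<le> 2 * card (nb ls X))" for ls
  have badsub: "{ls\<in>T. \<not> good ls} \<subseteq> U1 \<union> U2"
  proof
    fix ls assume "ls \<in> {ls\<in>T. \<not> good ls}"
    then have ls: "ls \<in> T" "\<not> good ls" by auto
    show "ls \<in> U1 \<union> U2"
    proof (cases "\<forall>X \<subseteq> {0..<7*m}. card X \<le> m \<longrightarrow> card X \<le> card (nb ls X)")
      case False
      then obtain X where X: "X \<subseteq> {0..<n}" "card X \<le> m" "card (nb ls X) < card X"
        by (auto simp: n_def not_le)
      have sub: "nb ls X \<subseteq> V" by (rule nbV[OF ls(1) X(1)])
      have "card (nb ls X) \<le> card X - 1" "card X - 1 \<le> card V" using X fV by auto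
      then obtain W where W: "nb ls X \<subseteq> W" "W \<subseteq> V" "card W = card X - 1"
        using exists_subset_between[OF _ _ sub fV(1)] by blast
      have "ls \<in> Bd X W" by (rule inBd[OF ls(1) X(1) W(1)])
      moreover have "card X \<in> {1..m}" using X by auto
      moreover have "X \<in> Xs (card X)" "W \<in> Ws (card X - 1)" using X W by (auto simp: Xs_def Ws_def)
      ultimately show ?thesis unfolding U1_def by blast
    next
      case True
      then obtain X where X: "X \<subseteq> {0..<n}" "m < card X" "2 * card (nb ls X) < 7*m"
        using ls(2) by (auto simp: good_def n_def not_le)
      obtain X' where X': "X' \<subseteq> X" "card X' = m + 1" "finite X'"
        using obtain_subset_with_card_n[of "m+1" X] X(2) by auto
      have X'n: "X' \<subseteq> {0..<n}" using X' X by auto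
      have sub: "nb ls X' \<subseteq> V" by (rule nbV[OF ls(1) X'n])
      have fnb: "finite (nb ls X)" using nbV[OF ls(1) X(1)] fV(1) finite_subset by blast
      have "card (nb ls X') \<le> card (nb ls X)" by (rule card_mono[OF fnb nb_mono[OF X'(1)]])
      then have "card (nb ls X') \<le> w" "w \<le> card V" using X(3) fV by (auto simp: w_def)
      then obtain W where W: "nb ls X' \<subseteq> W" "W \<subseteq> V" "card W = w"
        using exists_subset_between[OF _ _ sub fV(1)] by blast
      have "ls \<in> Bd X' W" by (rule inBd[OF ls(1) X'n W(1)])
      moreover have "X' \<in> Xs (m+1)" "W \<in> Ws w" using X'n X' W by (auto simp: Xs_def Ws_def)
      ultimately show ?thesis unfolding U2_def by blast
    qed
  qed
  have cXs: "card (Xs j) = n choose j" for j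
    using n_subsets[of "{0..<n}" j] by (simp add: Xs_def)
  have cWs: "card (Ws k) = (5*m) choose k" for k
    using n_subsets[of V k] fV by (simp add: Ws_def)
  have fXs: "finite (Xs j)" for j unfolding Xs_def by (rule finite_subset[of _ "Pow {0..<n}"]) auto
  have fWs: "finite (Ws k)" for k unfolding Ws_def by (rule finite_subset[of _ "Pow V"]) (use fV(1) in auto)
  have U1b: "real (card U1) \<le> (\<Sum>j\<in>{1..m}. real (7*m choose j) * real (5*m choose (j - 1)) * (real j / (5 * real m)) ^ (j * 32)) * real L ^ d"
  proof -
    have "real (card U1) \<le> (\<Sum>j\<in>{1..m}. real (7*m choose j) * real (5*m choose (j - 1)) * (real j / (5 * real m)) ^ (j * 32) * real L ^ d)"
      unfolding U1_def
    proof (rule real_card_UN_le, simp)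
      fix j assume j: "j \<in> {1..m}"
      let ?c = "(real j / (5 * real m)) ^ (j * 32) * real L ^ d"
      have one: "real (card (Bd X W)) \<le> ?c" if "X \<in> Xs j" "W \<in> Ws (j - 1)" for X W
      proof -
        have "real (card (Bd X W)) \<le> ((2 * real (card W) / real N) ^ card X) ^ d * real L ^ d"
          using that by (intro cBd) (auto simp: Xs_def Ws_def)
        also have "\<dots> = ((2 * real (j - 1) / real N) ^ j) ^ d * real L ^ d"
          using that by (simp add: Xs_def Ws_def)
        also have "\<dots> \<le> ((real j / (5 * real m)) ^ j) ^ d * real L ^ d"
        proof -
          have "2 * real (j - 1) / real N \<le> real j / (5 * real m)"
            using j m1 by (simp add: N_def divide_simps of_nat_diff)
          then show ?thesis by (intro mult_right_mono power_mono) auto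
        qed
        also have "\<dots> = ?c" by (simp add: power_mult d_def)
        finally show ?thesis .
      qed
      have "real (card (\<Union>X\<in>Xs j. \<Union>W\<in>Ws (j - 1). Bd X W)) \<le> (\<Sum>X\<in>Xs j. \<Sum>W\<in>Ws (j - 1). ?c)"
        by (intro real_card_UN_le fXs fWs one) auto
      also have "\<dots> = real (7*m choose j) * real (5*m choose (j - 1)) * ?c"
        using cXs cWs by (simp add: n_def)
      finally show "real (card (\<Union>X\<in>Xs j. \<Union>W\<in>Ws (j - 1). Bd X W)) \<le> real (7*m choose j) * real (5*m choose (j - 1)) * (real j / (5 * real m)) ^ (j * 32) * real L ^ d"
        by (simp add: mult.assoc)
    qed
    then show ?thesis by (simp add: sum_distrib_right)
  qed
  have U2b: "real (card U2) \<le> (1/20) * real L ^ d"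
  proof -
    let ?c = "((7/10::real) ^ (m+1)) ^ d * real L ^ d"
    have one: "real (card (Bd X W)) \<le> ?c" if "X \<in> Xs (m+1)" "W \<in> Ws w" for X W
    proof -
      have "real (card (Bd X W)) \<le> ((2 * real (card W) / real N) ^ card X) ^ d * real L ^ d"
        using that by (intro cBd) (auto simp: Xs_def Ws_def)
      also have "\<dots> = ((2 * real w / real N) ^ (m+1)) ^ d * real L ^ d"
        using that by (simp add: Xs_def Ws_def)
      also have "\<dots> \<le> ?c"
      proof -
        have "2 * w \<le> 7 * m" by (simp add: w_def)
        then have "2 * real w \<le> 7 * real m" by linarith
        then have "2 * real w / real N \<le> 7/10"
          using m1 by (simp add: N_def divide_simps)
        then show ?thesis by (intro mult_right_mono power_mono) auto
      qed
      finally show ?thesis .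
    qed
    have "real (card U2) \<le> (\<Sum>X\<in>Xs (m+1). \<Sum>W\<in>Ws w. ?c)"
      unfolding U2_def by (intro real_card_UN_le fXs fWs one) auto
    also have "\<dots> = real (7*m choose (m+1)) * real (5*m choose w) * ?c"
      using cXs cWs by (simp add: n_def)
    also have "\<dots> \<le> 2^(7*m) * 2^(5*m) * ((7/10::real) ^ (32 * m)) * real L ^ d"
    proof -
      have a: "real (7*m choose (m+1)) \<le> 2^(7*m)" using binomial_le_pow2[of "7*m" "m+1"]
        by (metis of_nat_le_iff of_nat_numeral of_nat_power)
      have b: "real (5*m choose w) \<le> 2^(5*m)" using binomial_le_pow2[of "5*m" w]
        by (metis of_nat_le_iff of_nat_numeral of_nat_power)
      have c: "((7/10::real) ^ (m+1)) ^ d \<le> (7/10) ^ (32 * m)"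
        unfolding d_def power_mult[symmetric] by (rule power_decreasing) auto
      have ab: "real (7*m choose (m+1)) * real (5*m choose w) \<le> 2^(7*m) * 2^(5*m)"
        by (rule mult_mono[OF a b]) auto
      have abc: "real (7*m choose (m+1)) * real (5*m choose w) * ((7/10::real) ^ (m+1)) ^ d \<le> 2^(7*m) * 2^(5*m) * ((7/10::real) ^ (32 * m))"
        by (rule mult_mono[OF ab c]) auto
      have "real (7*m choose (m+1)) * real (5*m choose w) * ((7/10::real) ^ (m+1)) ^ d * real L ^ d \<le> 2^(7*m) * 2^(5*m) * ((7/10::real) ^ (32 * m)) * real L ^ d"
        by (rule mult_right_mono[OF abc]) simp
      then show ?thesis by (simp only: mult.assoc)
    qed
    also have "2^(7*m) * 2^(5*m) * ((7/10::real) ^ (32 * m)) = (4096 * (7/10) ^ 32) ^ m"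
    proof -
      have "(2::real)^(7*m) * 2^(5*m) = 2^(12*m)" by (simp flip: power_add)
      also have "\<dots> = (2^12)^m" by (rule power_mult)
      finally have e1: "(2::real)^(7*m) * 2^(5*m) = 4096^m" by simp
      have e2: "(7/10::real) ^ (32 * m) = ((7/10) ^ 32) ^ m" by (rule power_mult)
      show ?thesis unfolding e1 e2 by (simp only: power_mult_distrib)
    qed
    also have "(4096 * (7/10::real) ^ 32) ^ m \<le> (1/20) ^ m"
      by (rule power_mono) (simp_all add: power_divide)
    also have "(1/20::real) ^ m \<le> 1/20"
      using power_decreasing[of 1 m "1/20::real"] m1 by simp
    finally show ?thesis by (simp add: mult_right_mono)
  qed
  have S1: "(\<Sum>j\<in>{1..m}. real (7*m choose j) * real (5*m choose (j - 1)) * (real j / (5 * real m)) ^ (j * 32)) \<le> 1/3"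
  proof -
    have "(\<Sum>j\<in>{1..m}. real (7*m choose j) * real (5*m choose (j - 1)) * (real j / (5 * real m)) ^ (j * 32)) \<le> (\<Sum>j\<in>{1..m}. (1/4::real) ^ j)"
      by (intro sum_mono term_bound) auto
    also have "\<dots> \<le> 1/3" by (rule geom_quarter)
    finally show ?thesis .
  qed
  have "real (card {ls\<in>T. \<not> good ls}) \<le> real (card (U1 \<union> U2))"
  proof -
    have "finite (U1 \<union> U2)" unfolding U1_def U2_def Bd_def
      by (intro finite_UnI finite_UN_I fXs fWs finite_lists_length_eq G_finite finite_atLeastLessThan)
         (auto intro!: finite_subset[OF _ finite_lists_length_eq[OF G_finite]])
    then show ?thesis using badsub by (simp add: card_mono)
  qed
  also have "\<dots> \<le> real (card U1) + real (card U2)" using card_Un_le[of U1 U2] by linarith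
  also have "\<dots> \<le> (1/3) * real L ^ d + (1/20) * real L ^ d"
    using U1b U2b S1 by (smt (verit, ccfv_SIG) mult_right_mono zero_le_power of_nat_0_le_iff)
  also have "\<dots> < real L ^ d" using Lpos by simp
  finally have "card {ls\<in>T. \<not> good ls} < card T" using cT by (metis of_nat_less_iff of_nat_power)
  then have "T \<noteq> {ls\<in>T. \<not> good ls}" by auto
  then obtain ls where ls: "ls \<in> T" "good ls" by blast
  have l1: "length ls = 32" using ls(1) by (simp add: T_def d_def)
  have l2: "\<forall>l\<in>set ls. length l = 7*m \<and> distinct l \<and> set l \<subseteq> {0..<10*m}"
    using ls(1) by (auto simp: T_def Lst_def n_def N_def)
  have l3: "(\<forall>X \<subseteq> {0..<7*m}. card X \<le> m \<longrightarrow> card X \<le> card (nb ls X)) \<and>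
    (\<forall>X \<subseteq> {0..<7*m}. m < card X \<longrightarrow> 7*m \<le> 2 * card (nb ls X))" using ls(2) by (simp only: good_def)
  show ?thesis using l1 l2 l3 by (intro exI[of _ ls]) (simp only:)
qed




lemma nb_bound:
  assumes "\<forall>l\<in>set ls. length l = 7*m \<and> distinct l \<and> set l \<subseteq> {0..<10*m}" "X \<subseteq> {0..<7*m}"
  shows "nb ls X \<subseteq> {0..<5*m}"
proof
  fix v assume "v \<in> nb ls X"
  then obtain l x where v: "v = l ! x div 2" "l \<in> set ls" "x \<in> X" by (auto simp: nb_def)
  have "x < length l" using assms v by auto
  then have "l ! x \<in> set l" by (rule nth_mem)
  moreover have "set l \<subseteq> {0..<10*m}" using assms(1) v(2) by blast
  ultimately have "l ! x < 10*m" by auto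
  then show "v \<in> {0..<5*m}" using v by auto
qed

lemma hall_cond:
  fixes m :: nat and lf lg :: "nat list list"
  assumes m1: "m \<ge> 1"
   and lfL: "\<forall>l\<in>set lf. length l = 7*m \<and> distinct l \<and> set l \<subseteq> {0..<10*m}"
   and lf1: "\<forall>X \<subseteq> {0..<7*m}. card X \<le> m \<longrightarrow> card X \<le> card (nb lf X)"
   and lf2: "\<forall>X \<subseteq> {0..<7*m}. m < card X \<longrightarrow> 7*m \<le> 2 * card (nb lf X)"
   and lgL: "\<forall>l\<in>set lg. length l = 7*m \<and> distinct l \<and> set l \<subseteq> {0..<10*m}"
   and lg1: "\<forall>X \<subseteq> {0..<7*m}. card X \<le> m \<longrightarrow> card X \<le> card (nb lg X)"
   and lg2: "\<forall>X \<subseteq> {0..<7*m}. m < card X \<longrightarrow> 7*m \<le> 2 * card (nb lg X)"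
   and E0def: "E0 = {(x, 9*m + l!x div 2) | x l. x < 7*m \<and> l \<in> set lf} \<union> {(2*m + l!y div 2, 7*m + y) | y l. y < 7*m \<and> l \<in> set lg}"
   and A1': "A1' \<subseteq> {0..<2*m}" and B1': "B1' \<subseteq> {7*m..<9*m}" and ck: "card A1' = card B1'"
   and S: "S \<subseteq> A1' \<union> {2*m..<7*m}"
  shows "card S \<le> card (nbh E0 S (B1' \<union> {9*m..<14*m}))"
proof (rule ccontr)
  define X0 where "X0 = A1' \<union> {2*m..<7*m}"
  define Y0 where "Y0 = B1' \<union> {9*m..<14*m}"
  define k where "k = card A1'"
  define NS where "NS = nbh E0 S Y0"
  assume "\<not> card S \<le> card (nbh E0 S (B1' \<union> {9*m..<14*m}))"
  then have lt: "card NS < card S" by (simp add: NS_def Y0_def)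
  have fA: "finite A1'" using A1' finite_subset by blast
  have fB: "finite B1'" using B1' finite_subset by blast
  have fX0: "finite X0" using fA by (simp add: X0_def)
  have fY0: "finite Y0" using fB by (simp add: Y0_def)
  have fS: "finite S" using S fX0 finite_subset unfolding X0_def by blast
  have NSY0: "NS \<subseteq> Y0" by (auto simp: NS_def nbh_def)
  have fNS: "finite NS" using NSY0 fY0 finite_subset by blast
  have cX0: "card X0 = k + 5*m"
  proof -
    have "card X0 = card A1' + card {2*m..<7*m}" unfolding X0_def
      by (rule card_Un_disjoint) (use fA A1' in auto)
    then show ?thesis by (simp add: k_def)
  qed
  have cY0: "card Y0 = k + 5*m"
  proof -
    have "card Y0 = card B1' + card {9*m..<14*m}" unfolding Y0_def
      by (rule card_Un_disjoint) (use fB B1' in auto)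
    then show ?thesis using ck by (simp add: k_def)
  qed
  have kle: "k \<le> 2*m" unfolding k_def using card_mono[OF _ A1'] by simp
  have SL: "S \<subseteq> {0..<7*m}"
  proof
    fix x assume "x \<in> S"
    then have "x \<in> A1' \<or> x \<in> {2*m..<7*m}" using S by blast
    then show "x \<in> {0..<7*m}" using A1' by auto
  qed
  have SX0: "S \<subseteq> X0" using S by (simp add: X0_def)
  have cSX0: "card S \<le> card X0" by (rule card_mono[OF fX0 SX0])
  define Bf where "Bf = (\<lambda>v. 9*m + v) ` nb lf S"
  have nbfS: "nb lf S \<subseteq> {0..<5*m}" by (rule nb_bound[OF lfL SL])
  have BfNS: "Bf \<subseteq> NS"
  proof
    fix z assume "z \<in> Bf"
    then obtain l x where z: "z = 9*m + l ! x div 2" "l \<in> set lf" "x \<in> S" by (auto simp: Bf_def nb_def)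
    have "l ! x div 2 \<in> nb lf S" using z by (auto simp: nb_def)
    then have "z \<in> {9*m..<14*m}" using nbfS z by auto
    moreover have "x < 7*m" using SL z by auto
    then have "(x, z) \<in> E0" using z unfolding E0def by blast
    ultimately show "z \<in> NS" using z by (auto simp: NS_def nbh_def Y0_def)
  qed
  have cBf: "card Bf = card (nb lf S)" unfolding Bf_def by (simp add: card_image)
  have "card (nb lf S) < card S" using card_mono[OF fNS BfNS] cBf lt by linarith
  then have "m < card S" using lf1 SL by (meson le_less_trans not_le)
  then have cf: "7*m \<le> 2 * card (nb lf S)" using lf2 SL by blast
  define Y where "Y = Y0 - NS"
  have cY: "card Y = card Y0 - card NS" unfolding Y_def using NSY0 fNS by (simp add: card_Diff_subset)
  define Yi where "Yi = (\<lambda>y. y - 7*m) ` Y"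
  have YR: "Y \<subseteq> {7*m..<14*m}" using B1' by (auto simp: Y_def Y0_def)
  have injY: "inj_on (\<lambda>y. y - 7*m) Y"
  proof (rule inj_onI)
    fix x y assume xy: "x \<in> Y" "y \<in> Y" "x - 7*m = y - 7*m"
    then have "7*m \<le> x" "7*m \<le> y" using YR by auto
    then show "x = y" using xy(3) by arith
  qed
  have cYi: "card Yi = card Y" unfolding Yi_def by (rule card_image[OF injY])
  have YiL: "Yi \<subseteq> {0..<7*m}"
  proof
    fix z assume "z \<in> Yi"
    then obtain y where "y \<in> Y" "z = y - 7*m" by (auto simp: Yi_def)
    moreover then have "y \<in> {7*m..<14*m}" using YR by blast
    ultimately show "z \<in> {0..<7*m}" by auto
  qed
  define Ng where "Ng = (\<lambda>v. 2*m + v) ` nb lg Yi"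
  have nbgY: "nb lg Yi \<subseteq> {0..<5*m}" by (rule nb_bound[OF lgL YiL])
  have NgA: "Ng \<subseteq> {2*m..<7*m} - S"
  proof
    fix z assume "z \<in> Ng"
    then obtain l yi where z: "z = 2*m + l ! yi div 2" "l \<in> set lg" "yi \<in> Yi" by (auto simp: Ng_def nb_def)
    have "l ! yi div 2 \<in> nb lg Yi" using z by (auto simp: nb_def)
    then have zA: "z \<in> {2*m..<7*m}" using nbgY z by auto
    obtain y where y: "y \<in> Y" "yi = y - 7*m" using z(3) by (auto simp: Yi_def)
    have "y \<in> {7*m..<14*m}" using YR y(1) by blast
    then have y7: "y = 7*m + yi" using y(2) by auto
    have "yi < 7*m" using YiL z by auto
    then have edge: "(z, y) \<in> E0" using z y7 unfolding E0def by blast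
    have "z \<notin> S"
    proof
      assume "z \<in> S"
      then have "y \<in> NS" using edge y(1) by (auto simp: NS_def nbh_def Y_def)
      then show False using y(1) by (simp add: Y_def)
    qed
    then show "z \<in> {2*m..<7*m} - S" using zA by simp
  qed
  have cNg: "card Ng = card (nb lg Yi)" unfolding Ng_def by (simp add: card_image)
  have "card Ng \<le> card (X0 - S)"
    using NgA by (intro card_mono) (use fX0 in \<open>auto simp: X0_def\<close>)
  also have "card (X0 - S) = card X0 - card S" using SX0 fS by (simp add: card_Diff_subset)
  finally have "card (nb lg Yi) \<le> card X0 - card S" using cNg by simp
  then have "card (nb lg Yi) < card Yi" using cYi cY lt cX0 cY0 cSX0 by linarith
  then have "m < card Yi" using lg1 YiL by (meson le_less_trans not_le)
  then have cg: "7*m \<le> 2 * card (nb lg Yi)" using lg2 YiL by blast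
  have Bf9: "Bf \<subseteq> {9*m..<14*m}" using nbfS by (auto simp: Bf_def)
  have c3: "card Y + card (nb lf S) \<le> k + 5*m"
  proof -
    have "Y \<subseteq> B1' \<union> ({9*m..<14*m} - Bf)" using BfNS by (auto simp: Y_def Y0_def)
    then have "card Y \<le> card (B1' \<union> ({9*m..<14*m} - Bf))" by (intro card_mono) (use fB in auto)
    also have "\<dots> \<le> card B1' + card ({9*m..<14*m} - Bf)" by (rule card_Un_le)
    also have "card ({9*m..<14*m} - Bf) = 5*m - card Bf" using Bf9 by (simp add: card_Diff_subset finite_subset)
    finally show ?thesis using ck cBf k_def card_mono[OF _ Bf9] by simp
  qed
  have Ng2: "Ng \<subseteq> {2*m..<7*m}" using NgA by auto
  have c4: "card S + card (nb lg Yi) \<le> k + 5*m"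
  proof -
    have "S \<subseteq> A1' \<union> ({2*m..<7*m} - Ng)" using NgA S by auto
    then have "card S \<le> card (A1' \<union> ({2*m..<7*m} - Ng))" by (intro card_mono) (use fA in auto)
    also have "\<dots> \<le> card A1' + card ({2*m..<7*m} - Ng)" by (rule card_Un_le)
    also have "card ({2*m..<7*m} - Ng) = 5*m - card Ng" using Ng2 by (simp add: card_Diff_subset finite_subset)
    finally show ?thesis using cNg k_def card_mono[OF _ Ng2] by simp
  qed
  show False using c3 c4 cf cg cY lt cY0 kle cSX0 cX0 by linarith
qed

lemma card_div2:
  fixes l :: "nat list"
  assumes "distinct l" "length l = k"
  shows "card {x. x < k \<and> l ! x div 2 = c} \<le> 2"
proof -
  have inj: "inj_on (nth l) {x. x < k \<and> l ! x div 2 = c}"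
    using assms by (auto simp: inj_on_def nth_eq_iff_index_eq)
  have sub: "nth l ` {x. x < k \<and> l ! x div 2 = c} \<subseteq> {2*c, 2*c+1}" by auto
  have "card {x. x < k \<and> l ! x div 2 = c} \<le> card {2*c, 2*c+1}"
    by (rule card_inj_on_le[OF inj sub]) simp
  also have "\<dots> \<le> 2" by (simp add: card_insert_if)
  finally show ?thesis .
qed

lemma card_UN_2:
  assumes "finite I" "\<And>i. i \<in> I \<Longrightarrow> card (A i) \<le> 2"
  shows "card (\<Union>i\<in>I. A i) \<le> 2 * card I"
proof -
  have "card (\<Union>i\<in>I. A i) \<le> (\<Sum>i\<in>I. card (A i))" by (rule card_UN_le[OF assms(1)])
  also have "\<dots> \<le> (\<Sum>i\<in>I. 2)" by (intro sum_mono assms(2))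
  finally show ?thesis by simp
qed

theorem mainTheorem7:
  shows "\<exists>m0::nat. \<forall>m\<ge>m0. \<exists>(A1::nat set) A2 B1 B2 (E::(nat \<times> nat) set).
     A1 \<inter> A2 = {} \<and> A1 \<inter> B1 = {} \<and> A1 \<inter> B2 = {} \<and>
     A2 \<inter> B1 = {} \<and> A2 \<inter> B2 = {} \<and> B1 \<inter> B2 = {} \<and>
     finite A1 \<and> finite A2 \<and> finite B1 \<and> finite B2 \<and>
     card A1 = 2 * m \<and> card B1 = 2 * m \<and> card A2 = 5 * m \<and> card B2 = 5 * m \<and>
     bip_graph (A1 \<union> A2) (B1 \<union> B2) E \<and>
     odd (card E) \<and>
     max_degree_le (A1 \<union> A2) (B1 \<union> B2) E 102 \<and>
     (\<forall>A1' B1'. A1' \<subseteq> A1 \<and> B1' \<subseteq> B1 \<and> card A1' = card B1' \<and> card A1' \<ge> m \<longrightarrow>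
        (\<exists>M. perfect_matching_between E (A1' \<union> A2) (B1' \<union> B2) M))"
proof (intro exI[of _ 10] allI impI)
  fix m :: nat assume m10: "10 \<le> m"
  then have m1: "m \<ge> 1" by simp
  obtain lf where lf: "length lf = 32" "\<forall>l\<in>set lf. length l = 7*m \<and> distinct l \<and> set l \<subseteq> {0..<10*m}"
    "\<forall>X \<subseteq> {0..<7*m}. card X \<le> m \<longrightarrow> card X \<le> card (nb lf X)"
    "\<forall>X \<subseteq> {0..<7*m}. m < card X \<longrightarrow> 7*m \<le> 2 * card (nb lf X)"
    using CL[OF m1] by blast
  obtain lg where lg: "length lg = 32" "\<forall>l\<in>set lg. length l = 7*m \<and> distinct l \<and> set l \<subseteq> {0..<10*m}"
    "\<forall>X \<subseteq> {0..<7*m}. card X \<le> m \<longrightarrow> card X \<le> card (nb lg X)"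
    "\<forall>X \<subseteq> {0..<7*m}. m < card X \<longrightarrow> 7*m \<le> 2 * card (nb lg X)"
    using CL[OF m1] by blast
  have lt5f: "l ! x div 2 < 5*m" if "l \<in> set lf" "x < 7*m" for l x
  proof -
    have "x < length l" using that lf(2) by auto
    then have "l ! x \<in> set l" by (rule nth_mem)
    moreover have "set l \<subseteq> {0..<10*m}" using lf(2) that(1) by blast
    ultimately show ?thesis by auto
  qed
  have lt5g: "l ! x div 2 < 5*m" if "l \<in> set lg" "x < 7*m" for l x
  proof -
    have "x < length l" using that lg(2) by auto
    then have "l ! x \<in> set l" by (rule nth_mem)
    moreover have "set l \<subseteq> {0..<10*m}" using lg(2) that(1) by blast
    ultimately show ?thesis by auto
  qed
  define A1 where "A1 = {0..<2*m}"
  define A2 where "A2 = {2*m..<7*m}"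
  define B1 where "B1 = {7*m..<9*m}"
  define B2 where "B2 = {9*m..<14*m}"
  define Ef where "Ef = {(x, 9*m + l!x div 2) | x l. x < 7*m \<and> l \<in> set lf}"
  define Eg where "Eg = {(2*m + l!y div 2, 7*m + y) | y l. y < 7*m \<and> l \<in> set lg}"
  define E0 where "E0 = Ef \<union> Eg"
  have Ef_img: "Ef = (\<lambda>(x, l). (x, 9*m + l!x div 2)) ` ({0..<7*m} \<times> set lf)"
    unfolding Ef_def by auto
  have Eg_img: "Eg = (\<lambda>(y, l). (2*m + l!y div 2, 7*m + y)) ` ({0..<7*m} \<times> set lg)"
    unfolding Eg_def by auto
  have csf: "card (set lf) \<le> 32" using card_length[of lf] lf(1) by simp
  have csg: "card (set lg) \<le> 32" using card_length[of lg] lg(1) by simp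
  have cEf: "card Ef \<le> 7*m*32"
  proof -
    have "card Ef \<le> card ({0..<7*m} \<times> set lf)" unfolding Ef_img by (rule card_image_le) simp
    also have "\<dots> = 7*m * card (set lf)" by (simp add: card_cartesian_product)
    also have "\<dots> \<le> 7*m*32" using csf by simp
    finally show ?thesis .
  qed
  have cEg: "card Eg \<le> 7*m*32"
  proof -
    have "card Eg \<le> card ({0..<7*m} \<times> set lg)" unfolding Eg_img by (rule card_image_le) simp
    also have "\<dots> = 7*m * card (set lg)" by (simp add: card_cartesian_product)
    also have "\<dots> \<le> 7*m*32" using csg by simp
    finally show ?thesis .
  qed
  have fE0: "finite E0" unfolding E0_def Ef_img Eg_img by simp
  have cE0: "card E0 \<le> 448*m" using card_Un_le[of Ef Eg] cEf cEg unfolding E0_def by linarith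
  define LR where "LR = {0..<7*m} \<times> {7*m..<14*m}"
  have E0LR: "E0 \<subseteq> LR"
  proof
    fix a assume "a \<in> E0"
    then show "a \<in> LR"
    proof (cases "a \<in> Ef")
      case True
      then obtain x l where "a = (x, 9*m + l!x div 2)" "x < 7*m" "l \<in> set lf" by (auto simp: Ef_def)
      then show ?thesis using lt5f by (auto simp: LR_def)
    next
      case False
      then have "a \<in> Eg" using \<open>a \<in> E0\<close> by (simp add: E0_def)
      then obtain y l where "a = (2*m + l!y div 2, 7*m + y)" "y < 7*m" "l \<in> set lg" by (auto simp: Eg_def)
      then show ?thesis using lt5g by (auto simp: LR_def)
    qed
  qed
  have cLR: "card LR = 49*m*m" by (simp add: LR_def card_cartesian_product)
  have "448*m < 49*m*m" using m10 by simp
  then have "card E0 < card LR" using cE0 cLR by linarith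
  then have "LR - E0 \<noteq> {}"
  proof (intro notI)
    assume "card E0 < card LR" "LR - E0 = {}"
    then have "LR \<subseteq> E0" by blast
    then have "card LR \<le> card E0" by (rule card_mono[OF fE0])
    then show False using \<open>card E0 < card LR\<close> by simp
  qed
  then obtain e where e: "e \<in> LR" "e \<notin> E0" by blast
  define E where "E = (if odd (card E0) then E0 else insert e E0)"
  have E0E: "E0 \<subseteq> E" by (auto simp: E_def)
  have ELR: "E \<subseteq> LR" using E0LR e by (auto simp: E_def)
  have Esub: "E \<subseteq> insert e E0" by (auto simp: E_def)
  have oddE: "odd (card E)" using fE0 e by (auto simp: E_def)
  have degE0: "card {a\<in>E0. fst a = v \<or> snd a = v} \<le> 96" for v
  proof -
    define F1 where "F1 = (\<lambda>l. (v, 9*m + l!v div 2)) ` set lf"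
    define F2 where "F2 = (\<Union>l\<in>set lf. (\<lambda>x. (x, v)) ` {x. x < 7*m \<and> l!x div 2 = v - 9*m})"
    define G1 where "G1 = (\<Union>l\<in>set lg. (\<lambda>y. (v, 7*m + y)) ` {y. y < 7*m \<and> l!y div 2 = v - 2*m})"
    define G2 where "G2 = (\<lambda>l. (2*m + l!(v - 7*m) div 2, v)) ` set lg"
    have cF1: "card F1 \<le> 32" unfolding F1_def using card_image_le[of "set lf"] csf by (meson finite_set le_trans)
    have cG2: "card G2 \<le> 32" unfolding G2_def using card_image_le[of "set lg"] csg by (meson finite_set le_trans)
    have cF2: "card F2 \<le> 64"
    proof -
      have "card F2 \<le> 2 * card (set lf)" unfolding F2_def
      proof (rule card_UN_2, simp)
        fix l assume l: "l \<in> set lf"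
        have "card ((\<lambda>x. (x, v)) ` {x. x < 7*m \<and> l!x div 2 = v - 9*m}) \<le> card {x. x < 7*m \<and> l!x div 2 = v - 9*m}"
          by (rule card_image_le) simp
        also have "\<dots> \<le> 2" using card_div2 lf(2) l by blast
        finally show "card ((\<lambda>x. (x, v)) ` {x. x < 7*m \<and> l!x div 2 = v - 9*m}) \<le> 2" .
      qed
      then show ?thesis using csf by linarith
    qed
    have cG1: "card G1 \<le> 64"
    proof -
      have "card G1 \<le> 2 * card (set lg)" unfolding G1_def
      proof (rule card_UN_2, simp)
        fix l assume l: "l \<in> set lg"
        have "card ((\<lambda>y. (v, 7*m + y)) ` {y. y < 7*m \<and> l!y div 2 = v - 2*m}) \<le> card {y. y < 7*m \<and> l!y div 2 = v - 2*m}"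
          by (rule card_image_le) simp
        also have "\<dots> \<le> 2" using card_div2 lg(2) l by blast
        finally show "card ((\<lambda>y. (v, 7*m + y)) ` {y. y < 7*m \<and> l!y div 2 = v - 2*m}) \<le> 2" .
      qed
      then show ?thesis using csg by linarith
    qed
    show ?thesis
    proof (cases "v < 7*m")
      case True
      have "{a\<in>E0. fst a = v \<or> snd a = v} \<subseteq> F1 \<union> G1"
      proof
        fix a assume a: "a \<in> {a\<in>E0. fst a = v \<or> snd a = v}"
        show "a \<in> F1 \<union> G1"
        proof (cases "a \<in> Ef")
          case True
          then obtain x l where xl: "a = (x, 9*m + l!x div 2)" "x < 7*m" "l \<in> set lf" by (auto simp: Ef_def)
          then have "x = v" using a \<open>v < 7*m\<close> by auto
          then show ?thesis using xl by (auto simp: F1_def)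
        next
          case False
          then have "a \<in> Eg" using a by (simp add: E0_def)
          then obtain y l where yl: "a = (2*m + l!y div 2, 7*m + y)" "y < 7*m" "l \<in> set lg" by (auto simp: Eg_def)
          then have "2*m + l!y div 2 = v" using a \<open>v < 7*m\<close> by auto
          then have "l!y div 2 = v - 2*m" by arith
          then show ?thesis using yl \<open>2*m + l!y div 2 = v\<close> unfolding G1_def by blast
        qed
      qed
      then have "card {a\<in>E0. fst a = v \<or> snd a = v} \<le> card (F1 \<union> G1)"
        by (intro card_mono) (auto simp: F1_def G1_def)
      also have "\<dots> \<le> card F1 + card G1" by (rule card_Un_le)
      finally show ?thesis using cF1 cG1 by linarith
    next
      case False
      have "{a\<in>E0. fst a = v \<or> snd a = v} \<subseteq> F2 \<union> G2"
      proof
        fix a assume a: "a \<in> {a\<in>E0. fst a = v \<or> snd a = v}"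
        show "a \<in> F2 \<union> G2"
        proof (cases "a \<in> Ef")
          case True
          then obtain x l where xl: "a = (x, 9*m + l!x div 2)" "x < 7*m" "l \<in> set lf" by (auto simp: Ef_def)
          then have "9*m + l!x div 2 = v" using a \<open>\<not> v < 7*m\<close> by auto
          then have "l!x div 2 = v - 9*m" by arith
          then show ?thesis using xl \<open>9*m + l!x div 2 = v\<close> unfolding F2_def by blast
        next
          case False
          then have "a \<in> Eg" using a by (simp add: E0_def)
          then obtain y l where yl: "a = (2*m + l!y div 2, 7*m + y)" "y < 7*m" "l \<in> set lg" by (auto simp: Eg_def)
          have "l!y div 2 < 5*m" using lt5g yl by blast
          then have "7*m + y = v" using a \<open>\<not> v < 7*m\<close> yl by auto
          then have "y = v - 7*m" by arith
          then show ?thesis using yl \<open>7*m + y = v\<close> unfolding G2_def by blast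
        qed
      qed
      then have "card {a\<in>E0. fst a = v \<or> snd a = v} \<le> card (F2 \<union> G2)"
        by (intro card_mono) (auto simp: F2_def G2_def)
      also have "\<dots> \<le> card F2 + card G2" by (rule card_Un_le)
      finally show ?thesis using cF2 cG2 by linarith
    qed
  qed
  have degE: "bdegree E v \<le> 102" for v
  proof -
    have "{a\<in>E. fst a = v \<or> snd a = v} \<subseteq> insert e {a\<in>E0. fst a = v \<or> snd a = v}" using Esub by auto
    then have "card {a\<in>E. fst a = v \<or> snd a = v} \<le> card (insert e {a\<in>E0. fst a = v \<or> snd a = v})"
      by (intro card_mono) (use fE0 in auto)
    also have "\<dots> \<le> Suc (card {a\<in>E0. fst a = v \<or> snd a = v})" by (rule card_insert_le_m1) simp_all
    finally show ?thesis using degE0[of v] by (simp add: bdegree_def)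
  qed
  have match: "\<exists>M. perfect_matching_between E (A1' \<union> A2) (B1' \<union> B2) M"
    if A1': "A1' \<subseteq> A1" and B1': "B1' \<subseteq> B1" and ck: "card A1' = card B1'" for A1' B1'
  proof -
    define X0 where "X0 = A1' \<union> A2"
    define Y0 where "Y0 = B1' \<union> B2"
    have fA: "finite A1'" using A1' finite_subset by (auto simp: A1_def)
    have fB: "finite B1'" using B1' finite_subset by (auto simp: B1_def)
    have fX0: "finite X0" using fA by (simp add: X0_def A2_def)
    have fY0: "finite Y0" using fB by (simp add: Y0_def B2_def)
    have dA: "A1' \<inter> A2 = {}"
    proof (rule ccontr)
      assume "A1' \<inter> A2 \<noteq> {}"
      then obtain x where "x \<in> A1'" "x \<in> A2" by blast
      moreover from this(1) have "x \<in> A1" using A1' by blast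
      ultimately show False by (simp add: A1_def A2_def)
    qed
    have dB: "B1' \<inter> B2 = {}"
    proof (rule ccontr)
      assume "B1' \<inter> B2 \<noteq> {}"
      then obtain x where "x \<in> B1'" "x \<in> B2" by blast
      moreover from this(1) have "x \<in> B1" using B1' by blast
      ultimately show False by (simp add: B1_def B2_def)
    qed
    have cX0: "card X0 = card A1' + 5*m" unfolding X0_def
      using card_Un_disjoint[OF fA _ dA] by (simp add: A2_def)
    have cY0: "card Y0 = card B1' + 5*m" unfolding Y0_def
      using card_Un_disjoint[OF fB _ dB] by (simp add: B2_def)
    have E0def: "E0 = {(x, 9*m + l!x div 2) | x l. x < 7*m \<and> l \<in> set lf} \<union> {(2*m + l!y div 2, 7*m + y) | y l. y < 7*m \<and> l \<in> set lg}"
      by (simp add: E0_def Ef_def Eg_def)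
    have hc: "card S \<le> card (nbh E0 S Y0)" if "S \<subseteq> X0" for S
      unfolding Y0_def B2_def
      by (rule hall_cond[OF m1 lf(2,3,4) lg(2,3,4) E0def _ _ ck])
         (use A1' B1' that in \<open>auto simp: A1_def B1_def X0_def A2_def\<close>)
    obtain h where h: "inj_on h X0" "\<forall>x\<in>X0. h x \<in> Y0 \<and> (x, h x) \<in> E0"
      using hall[OF fX0 fY0 hc] by blast
    have hsub: "h ` X0 \<subseteq> Y0" using h by auto
    have "card (h ` X0) = card Y0" using card_image[OF h(1)] cX0 cY0 ck by simp
    then have himg: "h ` X0 = Y0" using card_subset_eq[OF fY0 hsub] by simp
    define M where "M = (\<lambda>x. (x, h x)) ` X0"
    have "perfect_matching_between E X0 Y0 M"
      unfolding perfect_matching_between_def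
    proof (intro conjI ballI)
      show "M \<subseteq> E" using h E0E by (auto simp: M_def)
      show "M \<subseteq> X0 \<times> Y0" using h by (auto simp: M_def)
      fix x assume "x \<in> X0"
      then show "\<exists>!y. (x, y) \<in> M" by (auto simp: M_def)
    next
      fix y assume "y \<in> Y0"
      then obtain x where x: "x \<in> X0" "h x = y" using himg by blast
      show "\<exists>!x. (x, y) \<in> M"
      proof (rule ex1I[of _ x])
        show "(x, y) \<in> M" using x by (auto simp: M_def)
        fix x' assume "(x', y) \<in> M"
        then have "x' \<in> X0" "h x' = y" by (auto simp: M_def)
        then show "x' = x" using x h(1) by (auto simp: inj_on_def)
      qed
    qed
    then show ?thesis unfolding X0_def Y0_def by blast
  qed
  have LRe: "A1 \<union> A2 = {0..<7*m}" "B1 \<union> B2 = {7*m..<14*m}"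
    by (auto simp: A1_def A2_def B1_def B2_def)
  show "\<exists>(A1::nat set) A2 B1 B2 (E::(nat \<times> nat) set).
     A1 \<inter> A2 = {} \<and> A1 \<inter> B1 = {} \<and> A1 \<inter> B2 = {} \<and>
     A2 \<inter> B1 = {} \<and> A2 \<inter> B2 = {} \<and> B1 \<inter> B2 = {} \<and>
     finite A1 \<and> finite A2 \<and> finite B1 \<and> finite B2 \<and>
     card A1 = 2 * m \<and> card B1 = 2 * m \<and> card A2 = 5 * m \<and> card B2 = 5 * m \<and>
     bip_graph (A1 \<union> A2) (B1 \<union> B2) E \<and>
     odd (card E) \<and>
     max_degree_le (A1 \<union> A2) (B1 \<union> B2) E 102 \<and>
     (\<forall>A1' B1'. A1' \<subseteq> A1 \<and> B1' \<subseteq> B1 \<and> card A1' = card B1' \<and> card A1' \<ge> m \<longrightarrow>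
        (\<exists>M. perfect_matching_between E (A1' \<union> A2) (B1' \<union> B2) M))"
  proof -
    have f1: "A1 \<inter> A2 = {}" "A1 \<inter> B1 = {}" "A1 \<inter> B2 = {}" "A2 \<inter> B1 = {}" "A2 \<inter> B2 = {}" "B1 \<inter> B2 = {}"
      by (auto simp: A1_def A2_def B1_def B2_def)
    have f2: "finite A1" "finite A2" "finite B1" "finite B2"
      by (simp_all add: A1_def A2_def B1_def B2_def)
    have f3: "card A1 = 2 * m" "card B1 = 2 * m" "card A2 = 5 * m" "card B2 = 5 * m"
      by (simp_all add: A1_def A2_def B1_def B2_def)
    have f4: "bip_graph (A1 \<union> A2) (B1 \<union> B2) E"
      unfolding bip_graph_def LRe using ELR by (auto simp: LR_def)
    have f5: "max_degree_le (A1 \<union> A2) (B1 \<union> B2) E 102"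
      unfolding max_degree_le_def using degE by blast
    have f6: "\<forall>A1' B1'. A1' \<subseteq> A1 \<and> B1' \<subseteq> B1 \<and> card A1' = card B1' \<and> card A1' \<ge> m \<longrightarrow>
        (\<exists>M. perfect_matching_between E (A1' \<union> A2) (B1' \<union> B2) M)"
      using match by blast
    show ?thesis
      apply (rule exI[of _ A1], rule exI[of _ A2], rule exI[of _ B1], rule exI[of _ B2], rule exI[of _ E])
      using f1 f2 f3 f4 oddE f5 f6 by blast
  qed
qed


end
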